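(* Let $t,c,k\in\mathbb{N}$, let $G$ be a strongly $t$-boundaried graph, and let $H$ and $H'$ be $t$-boundaried graphs that are $c$-equivalent. Then $G\oplus H$ has a vertex cover of size at most $k$ if and only if $G\oplus H'$ has a vertex cover of size at most $k-c$.
   Context: Graphs are finite, simple, undirected. A graph $G$ is $t$-boundaried if $t$ of its non-isolated vertices $x_1,\dots,x_t$ (the boundary) are bijectively labeled with $1,\dots,t$; it is strongly $t$-boundaried if moreover $\{x_1,\dots,x_t\}$ is an independent set in $G$. For a strongly $t$-boundaried $G$ and a $t$-boundaried $H$, $G\oplus H$ (gluing) is obtained from the disjoint union of $G$ and $H$ by identifying the boundary vertices with the same label. A vertex set $S$ of $G\oplus H$ is compatible with $X\subseteq\{1,\dots,t\}$ in $G$ if for all $i$: $N_G(x_i)\subseteq S \iff i\in X$, where $N_G$ is the neighborhood in $G$. The profile $P^G_H:2^{\{1,\dots,t\}}\to\mathbb{N}\cup\{\infty\}$ assigns to $X$ the minimum of $|S\cap V(H)|$ over all vertex covers $S$ of $G\oplus H$ compatible with $X$ in $G$ ($\infty$ if none exists). Two $t$-boundaried graphs $H,H'$ are $c$-equivalent if $P^{G}_H(X)=P^{G}_{H'}(X)+c$ for every strongly $t$-boundaried graph $G$ and every $X\subseteq\{1,\dots,t\}$ (with $\infty+c=\infty$). *)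

theory Defs
  imports Main "HOL-Library.Extended_Nat"
begin

text \<open>A t-boundaried graph additionally carries a labelling bnd of the boundary:
  bnd i is the boundary vertex with label i, for i in {1..t}.\<close>

record 'a bgraph =
  verts :: "'a set"
  edges :: "'a set set"
  bnd   :: "nat \<Rightarrow> 'a"

definition simple_graph :: "'a set \<Rightarrow> 'a set set \<Rightarrow> bool" where
  "simple_graph V E \<longleftrightarrow> finite V \<and>
     (\<forall>e\<in>E. \<exists>u v. e = {u, v} \<and> u \<noteq> v \<and> u \<in> V \<and> v \<in> V)"

definition vertex_cover :: "'a set \<Rightarrow> 'a set set \<Rightarrow> 'a set \<Rightarrow> bool" where
  "vertex_cover V E S \<longleftrightarrow> S \<subseteq> V \<and> (\<forall>e\<in>E. e \<inter> S \<noteq> {})"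

definition nbhd :: "'a set set \<Rightarrow> 'a \<Rightarrow> 'a set" where
  "nbhd E x = {y. {x, y} \<in> E}"

definition t_boundaried :: "nat \<Rightarrow> 'a bgraph \<Rightarrow> bool" where
  "t_boundaried t G \<longleftrightarrow> simple_graph (verts G) (edges G) \<and>
     inj_on (bnd G) {1..t} \<and>
     (\<forall>i\<in>{1..t}. bnd G i \<in> verts G \<and> (\<exists>e\<in>edges G. bnd G i \<in> e))"

definition strongly_t_boundaried :: "nat \<Rightarrow> 'a bgraph \<Rightarrow> bool" where
  "strongly_t_boundaried t G \<longleftrightarrow> t_boundaried t G \<and>
     (\<forall>i\<in>{1..t}. \<forall>j\<in>{1..t}. {bnd G i, bnd G j} \<notin> edges G)"

text \<open>Gluing: the vertices of G are embedded via Inl, the non-boundary vertices of H via Inr,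
  and the boundary vertex of H with label i is identified with Inl (bnd G i).\<close>

definition glue_emb :: "nat \<Rightarrow> 'a bgraph \<Rightarrow> 'b bgraph \<Rightarrow> 'b \<Rightarrow> 'a + 'b" where
  "glue_emb t G H v =
     (if \<exists>i\<in>{1..t}. bnd H i = v
      then Inl (bnd G (THE i. i \<in> {1..t} \<and> bnd H i = v))
      else Inr v)"

definition glue_verts :: "nat \<Rightarrow> 'a bgraph \<Rightarrow> 'b bgraph \<Rightarrow> ('a + 'b) set" where
  "glue_verts t G H = Inl ` verts G \<union> glue_emb t G H ` verts H"

definition glue_edges :: "nat \<Rightarrow> 'a bgraph \<Rightarrow> 'b bgraph \<Rightarrow> ('a + 'b) set set" where
  "glue_edges t G H = (\<lambda>e. Inl ` e) ` edges G \<union> (\<lambda>e. glue_emb t G H ` e) ` edges H"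

definition compatible :: "nat \<Rightarrow> 'a bgraph \<Rightarrow> ('a + 'b) set \<Rightarrow> nat set \<Rightarrow> bool" where
  "compatible t G S X \<longleftrightarrow>
     (\<forall>i\<in>{1..t}. (Inl ` nbhd (edges G) (bnd G i) \<subseteq> S \<longleftrightarrow> i \<in> X))"

text \<open>The profile P^G_H(X); the infimum of the empty set in enat is \<infinity>.\<close>

definition profile :: "nat \<Rightarrow> 'a bgraph \<Rightarrow> 'b bgraph \<Rightarrow> nat set \<Rightarrow> enat" where
  "profile t G H X = Inf {enat (card (S \<inter> glue_emb t G H ` verts H)) | S.
      vertex_cover (glue_verts t G H) (glue_edges t G H) S \<and> compatible t G S X}"

text \<open>c-equivalence, where the strongly t-boundaried graphs G range over graphs whose
  vertices are drawn from the type 'g.\<close>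

definition c_equivalent :: "'g itself \<Rightarrow> nat \<Rightarrow> nat \<Rightarrow> 'b bgraph \<Rightarrow> 'c bgraph \<Rightarrow> bool" where
  "c_equivalent _ t c H H' \<longleftrightarrow>
     (\<forall>(G :: 'g bgraph) X. strongly_t_boundaried t G \<longrightarrow> X \<subseteq> {1..t} \<longrightarrow>
        profile t G H X = profile t G H' X + enat c)"

end

theory Submission
  imports Defs
begin

lemma emb_bnd:
  assumes "t_boundaried t H" "i \<in> {1..t}"
  shows "glue_emb t G H (bnd H i) = Inl (bnd G i)"
proof -
  have inj: "inj_on (bnd H) {1..t}" using assms(1) unfolding t_boundaried_def by blast
  have "(THE j. j \<in> {1..t} \<and> bnd H j = bnd H i) = i"
    using inj assms(2) by (intro the_equality) (auto dest: inj_onD)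
  thus ?thesis using assms(2) unfolding glue_emb_def by auto
qed

lemma emb_Inl:
  assumes "t_boundaried t H"
  shows "Inl w \<in> glue_emb t G H ` verts H \<longleftrightarrow> w \<in> bnd G ` {1..t}"
proof
  assume "Inl w \<in> glue_emb t G H ` verts H"
  then obtain v where v: "v \<in> verts H" "glue_emb t G H v = Inl w" by auto
  then have "\<exists>i\<in>{1..t}. bnd H i = v" unfolding glue_emb_def by (auto split: if_splits)
  then obtain i where i: "i \<in> {1..t}" "bnd H i = v" by blast
  then show "w \<in> bnd G ` {1..t}" using emb_bnd[OF assms i(1), of G] v by auto
next
  assume "w \<in> bnd G ` {1..t}"
  then obtain i where i: "i \<in> {1..t}" "w = bnd G i" by auto
  have "bnd H i \<in> verts H" using assms i(1) unfolding t_boundaried_def by blast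
  then show "Inl w \<in> glue_emb t G H ` verts H" using emb_bnd[OF assms i(1), of G] i by force
qed

lemma finite_glue:
  assumes "t_boundaried t G" "t_boundaried t H"
  shows "finite (glue_verts t G H)"
  using assms unfolding t_boundaried_def simple_graph_def glue_verts_def by auto

lemma transfer:
  fixes G :: "'a bgraph" and H :: "'b bgraph" and H' :: "'c bgraph"
  assumes sG: "strongly_t_boundaried t G"
    and tH: "t_boundaried t H" and tH': "t_boundaried t H'"
    and S: "vertex_cover (glue_verts t G H) (glue_edges t G H) S"
    and P: "profile t G H' {i\<in>{1..t}. Inl ` nbhd (edges G) (bnd G i) \<subseteq> S} + enat c
            \<le> enat (card (S \<inter> glue_emb t G H ` verts H) + d)"
  shows "\<exists>T. vertex_cover (glue_verts t G H') (glue_edges t G H') T \<and> card T + c \<le> card S + d"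
proof -
  define X where "X = {i\<in>{1..t}. Inl ` nbhd (edges G) (bnd G i) \<subseteq> S}"
  define A where "A = glue_emb t G H ` verts H"
  define A' where "A' = glue_emb t G H' ` verts H'"
  define M where "M = {enat (card (S \<inter> A')) | S.
      vertex_cover (glue_verts t G H') (glue_edges t G H') S \<and> compatible t G S X}"
  have tG: "t_boundaried t G" using sG unfolding strongly_t_boundaried_def by blast
  have prof: "profile t G H' X = Inf M" unfolding profile_def M_def A'_def by simp
  have "M \<noteq> {}"
  proof
    assume "M = {}"
    then have "profile t G H' X = \<infinity>" using prof by (simp add: Inf_enat_def)
    then show False using P unfolding X_def by simp
  qed
  then have "Inf M \<in> M" unfolding Inf_enat_def by (auto intro: LeastI)
  then obtain S' where S': "vertex_cover (glue_verts t G H') (glue_edges t G H') S'"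
      "compatible t G S' X" "profile t G H' X = enat (card (S' \<inter> A'))"
    using prof unfolding M_def by auto
  have cnt: "card (S' \<inter> A') + c \<le> card (S \<inter> A) + d"
    using P S'(3) unfolding X_def A_def by simp
  define SG where "SG = {w. Inl w \<in> S \<and> w \<notin> bnd G ` {1..t}}"
  define T where "T = (Inl ` SG :: ('a + 'c) set) \<union> (S' \<inter> A')"
  have AInl: "\<And>w. Inl w \<in> A \<longleftrightarrow> w \<in> bnd G ` {1..t}" unfolding A_def using emb_Inl[OF tH] .
  have AInl': "\<And>w. Inl w \<in> A' \<longleftrightarrow> w \<in> bnd G ` {1..t}" unfolding A'_def using emb_Inl[OF tH'] .
  have finS: "finite S" using S finite_glue[OF tG tH] unfolding vertex_cover_def
    by (meson finite_subset)
  have finS': "finite S'" using S'(1) finite_glue[OF tG tH'] unfolding vertex_cover_def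
    by (meson finite_subset)
  have "card T \<le> card (Inl ` SG :: ('a + 'c) set) + card (S' \<inter> A')" unfolding T_def by (rule card_Un_le)
  moreover have "card (Inl ` SG :: ('a + 'c) set) = card SG" by (simp add: card_image)
  moreover have "card SG = card (Inl ` SG :: ('a + 'b) set)" by (simp add: card_image)
  moreover have "card (Inl ` SG :: ('a + 'b) set) \<le> card (S - A)"
  proof (rule card_mono)
    show "finite (S - A)" using finS by simp
    show "(Inl ` SG :: ('a + 'b) set) \<subseteq> S - A" unfolding SG_def using AInl by auto
  qed
  moreover have "card S = card (S - A) + card (S \<inter> A)"
    using card_Int_Diff[OF finS, of A] by simp
  ultimately have card: "card T + c \<le> card S + d" using cnt by linarith
  have sub: "T \<subseteq> glue_verts t G H'"
  proof
    fix x assume "x \<in> T"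
    then have "x \<in> Inl ` SG \<or> x \<in> S' \<inter> A'" unfolding T_def by blast
    then show "x \<in> glue_verts t G H'"
    proof
      assume "x \<in> Inl ` SG"
      then obtain w where w: "x = Inl w" "Inl w \<in> S" "w \<notin> bnd G ` {1..t}" unfolding SG_def by auto
      then have "Inl w \<in> glue_verts t G H" "Inl w \<notin> A" using S AInl unfolding vertex_cover_def by auto
      then have "w \<in> verts G" unfolding glue_verts_def A_def by auto
      then show "x \<in> glue_verts t G H'" using w unfolding glue_verts_def by auto
    next
      assume "x \<in> S' \<inter> A'"
      then show "x \<in> glue_verts t G H'" unfolding A'_def glue_verts_def by auto
    qed
  qed
  have cov: "\<forall>e\<in>glue_edges t G H'. e \<inter> T \<noteq> {}"
  proof
    fix e assume he: "e \<in> glue_edges t G H'"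
    have "e \<in> (\<lambda>e. Inl ` e) ` edges G \<or> e \<in> (\<lambda>e. glue_emb t G H' ` e) ` edges H'"
      using he unfolding glue_edges_def by (simp only: Un_iff)
    then show "e \<inter> T \<noteq> {}"
    proof (elim disjE imageE)
      fix e0 assume H0: "e = glue_emb t G H' ` e0" "e0 \<in> edges H'"
      note H = H0(2) H0(1)
      from tH' have sg: "simple_graph (verts H') (edges H')" by (simp add: t_boundaried_def)
      obtain u v where "e0 = {u,v}" "u \<in> verts H'" "v \<in> verts H'"
        using sg H(1) unfolding simple_graph_def by meson
      then have "e0 \<subseteq> verts H'" by simp
      then have "e \<subseteq> A'" unfolding H(2) A'_def by (rule image_mono)
      moreover have "e \<inter> S' \<noteq> {}" using S'(1) he unfolding vertex_cover_def by blast
      ultimately show ?thesis unfolding T_def by blast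
    next
      fix e0 assume G0: "e = Inl ` e0" "e0 \<in> edges G"
      note G = G0(2) G0(1)
      from tG have sgG: "simple_graph (verts G) (edges G)" by (simp add: t_boundaried_def)
      obtain u v where uv: "e0 = {u, v}" "u \<noteq> v"
        using sgG G(1) unfolding simple_graph_def by meson
      have "Inl ` e0 \<in> glue_edges t G H" unfolding glue_edges_def using G(1) by blast
      then have eS: "Inl ` e0 \<inter> S \<noteq> {}" using S unfolding vertex_cover_def by blast
      show ?thesis
      proof (cases "\<exists>w\<in>e0. Inl w \<in> S \<and> w \<notin> bnd G ` {1..t}")
        case True
        then obtain w where "w \<in> e0" "Inl w \<in> S" "w \<notin> bnd G ` {1..t}" by blast
        then have "w \<in> SG" "Inl w \<in> e" using G(2) unfolding SG_def by auto
        then have "Inl w \<in> e \<inter> T" unfolding T_def by blast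
        then show ?thesis by blast
      next
        case False
        obtain w0 where w0: "w0 \<in> e0" "Inl w0 \<in> S" using eS by blast
        from False w0 have "w0 \<in> bnd G ` {1..t}" by blast
        then obtain i where i: "i \<in> {1..t}" "w0 = bnd G i" by blast
        obtain z where z: "e0 = {w0, z}"
        proof (cases "w0 = u")
          case True then show ?thesis using that uv by blast
        next
          case False then have "w0 = v" using w0(1) uv by blast
          then show ?thesis using that[of u] uv by (simp add: insert_commute)
        qed
        have ze: "{bnd G i, z} \<in> edges G" using G(1) z i by simp
        have zB: "z \<notin> bnd G ` {1..t}"
        proof
          assume "z \<in> bnd G ` {1..t}"
          then obtain j where "j \<in> {1..t}" "z = bnd G j" by auto
          then show False using sG ze i unfolding strongly_t_boundaried_def by blast
        qed
        have "z \<in> e0" using z by simp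
        then have "Inl z \<notin> S" using False zB by blast
        moreover have "z \<in> nbhd (edges G) (bnd G i)" using ze unfolding nbhd_def by simp
        ultimately have "i \<notin> X" unfolding X_def by auto
        then have "\<not> Inl ` nbhd (edges G) (bnd G i) \<subseteq> S'"
          using S'(2) i(1) unfolding compatible_def by blast
        then obtain y where y: "y \<in> nbhd (edges G) (bnd G i)" "Inl y \<notin> S'" by auto
        have "{bnd G i, y} \<in> edges G" using y(1) unfolding nbhd_def by simp
        then have "Inl ` {bnd G i, y} \<in> glue_edges t G H'" unfolding glue_edges_def by blast
        then have "Inl ` {bnd G i, y} \<inter> S' \<noteq> {}" using S'(1) unfolding vertex_cover_def by blast
        then have "Inl (bnd G i) \<in> S'" using y(2) by auto
        moreover have "Inl (bnd G i) \<in> A'" using AInl' i(1) by auto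
        moreover have "Inl (bnd G i) \<in> e" using G(2) z i by auto
        ultimately show ?thesis unfolding T_def by blast
      qed
    qed
  qed
  show ?thesis using sub cov card unfolding vertex_cover_def by blast
qed

lemma prof_le:
  assumes "vertex_cover (glue_verts t G H) (glue_edges t G H) S"
  shows "profile t G H {i\<in>{1..t}. Inl ` nbhd (edges G) (bnd G i) \<subseteq> S}
         \<le> enat (card (S \<inter> glue_emb t G H ` verts H))"
  unfolding profile_def
  by (rule Inf_lower) (use assms in \<open>auto simp: compatible_def\<close>)

theorem lemma3:
  fixes t c k :: nat
    and G :: "'a bgraph" and H :: "'b bgraph" and H' :: "'c bgraph"
  assumes "strongly_t_boundaried t G"
    and "t_boundaried t H"
    and "t_boundaried t H'"
    and "c_equivalent TYPE('a) t c H H'"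
  shows "(\<exists>S. vertex_cover (glue_verts t G H) (glue_edges t G H) S \<and> card S \<le> k) \<longleftrightarrow>
         (\<exists>S. vertex_cover (glue_verts t G H') (glue_edges t G H') S \<and>
              int (card S) \<le> int k - int c)"
proof
  assume "\<exists>S. vertex_cover (glue_verts t G H) (glue_edges t G H) S \<and> card S \<le> k"
  then obtain S where S: "vertex_cover (glue_verts t G H) (glue_edges t G H) S" "card S \<le> k" by blast
  define X where "X = {i\<in>{1..t}. Inl ` nbhd (edges G) (bnd G i) \<subseteq> S}"
  have "X \<subseteq> {1..t}" unfolding X_def by auto
  then have "profile t G H X = profile t G H' X + enat c"
    using assms(1,4) unfolding c_equivalent_def by blast
  with prof_le[OF S(1)] have "profile t G H' X + enat c \<le> enat (card (S \<inter> glue_emb t G H ` verts H) + 0)"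
    unfolding X_def by simp
  from transfer[OF assms(1-3) S(1) this[unfolded X_def]] obtain T where
    "vertex_cover (glue_verts t G H') (glue_edges t G H') T" "card T + c \<le> card S" by auto
  with S(2) show "\<exists>S. vertex_cover (glue_verts t G H') (glue_edges t G H') S \<and>
              int (card S) \<le> int k - int c" by (intro exI[of _ T]) auto
next
  assume "\<exists>S. vertex_cover (glue_verts t G H') (glue_edges t G H') S \<and> int (card S) \<le> int k - int c"
  then obtain S where S: "vertex_cover (glue_verts t G H') (glue_edges t G H') S"
    "int (card S) \<le> int k - int c" by blast
  define X where "X = {i\<in>{1..t}. Inl ` nbhd (edges G) (bnd G i) \<subseteq> S}"
  have "X \<subseteq> {1..t}" unfolding X_def by auto
  then have "profile t G H X = profile t G H' X + enat c"
    using assms(1,4) unfolding c_equivalent_def by blast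
  then have "profile t G H X + enat 0 = profile t G H' X + enat c" by (simp add: zero_enat_def[symmetric])
  also have "\<dots> \<le> enat (card (S \<inter> glue_emb t G H' ` verts H')) + enat c"
    by (rule add_right_mono) (use prof_le[OF S(1)] in \<open>simp add: X_def\<close>)
  also have "\<dots> = enat (card (S \<inter> glue_emb t G H' ` verts H') + c)" by simp
  finally have "profile t G H X + enat 0 \<le> enat (card (S \<inter> glue_emb t G H' ` verts H') + c)" .
  from transfer[OF assms(1,3,2) S(1) this[unfolded X_def]] obtain T where
    "vertex_cover (glue_verts t G H) (glue_edges t G H) T" "card T + 0 \<le> card S + c" by auto
  with S(2) show "\<exists>S. vertex_cover (glue_verts t G H) (glue_edges t G H) S \<and> card S \<le> k"
    by (intro exI[of _ T]) auto
qed

end
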